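(* Let $F$ be a sensori-computational device and $N\subseteq Y(F)$. If there exists a sensori-computational device that output simulates $F$ modulo the $N$-shrink $\pi_N$ (with $L=\mathcal{L}(F)$, $\Sigma=Y(F)$), then there exists a sensori-computational device that output simulates $F$ modulo the $N$-pump $P_N$ (with $L=\mathcal{L}(F)$, $\Sigma=Y(F)$).
   Context: A sensori-computational device is a 6-tuple $F=(V,V_0,Y,\tau,C,c)$ where $V$ is a non-empty finite set of states, $V_0\subseteq V$ a non-empty set of initial states, $Y=Y(F)$ a finite set of observations, $\tau:V\times V\to\mathcal{P}(Y)$, $C$ a set of outputs, $c:V\to\mathcal{P}(C)\setminus\{\emptyset\}$. A string $y_1\cdots y_n$ reaches $w$ from $v$ if there are states $w_0=v,\dots,w_n=w$ with $y_i\in\tau(w_{i-1},w_i)$; $\mathcal{R}_F(s)$ is the set of states reached by $s$ from some initial state; $\mathcal{L}(F)=\{s\in Y^*:\mathcal{R}_F(s)\ne\emptyset\}$; $\mathcal{C}_F(s)=\bigcup_{v\in\mathcal{R}_F(s)}c(v)$. For a relation $R\subseteq A\times B$ between sets of strings, $F'$ output simulates $F$ modulo $R$ if for every $s\in\mathcal{L}(F)$: (1) some $t\in\mathcal{L}(F')$ has $s\,R\,t$; (2) every $t\in B$ with $s\,R\,t$ satisfies $t\in\mathcal{L}(F')$ and $\mathcal{C}_F(s)\supseteq\mathcal{C}_{F'}(t)$. For a set $\Sigma$, $L\subseteq\Sigma^*$ and $N\subseteq\Sigma$: the $N$-shrink is the function $\pi_N:L\to(\Sigma\setminus N)^*$ deleting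 every occurrence of symbols of $N$ from a string (so $\pi_N(\epsilon)=\epsilon$). The $N$-pump is the relation $P_N\subseteq L\times\Sigma^*$ defined as the smallest relation such that $\epsilon\,P_N\,\epsilon$, $s\,P_N\,s$ for every $s\in L$, and whenever $s\,P_N\,t_1\cdots t_\ell$, then $s\,P_N\,t_1\cdots t_k\,b\,t_{k+1}\cdots t_\ell$ for every $b\in N$ and $k\in\{1,\dots,\ell\}$ (elements of $N$ are inserted anywhere except before the first symbol). *)

theory Defs
  imports Main
begin

record ('v, 'y, 'c) scdevice =
  states :: "'v set"
  init :: "'v set"
  obs :: "'y set"
  trans :: "'v \<Rightarrow> 'v \<Rightarrow> 'y set"
  outs :: "'c set"
  outf :: "'v \<Rightarrow> 'c set"

definition scd :: "('v, 'y, 'c) scdevice \<Rightarrow> bool" where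
  "scd F \<longleftrightarrow> states F \<noteq> {} \<and> finite (states F) \<and>
     init F \<noteq> {} \<and> init F \<subseteq> states F \<and> finite (obs F) \<and>
     (\<forall>v w. trans F v w \<subseteq> obs F) \<and>
     (\<forall>v w. (v \<notin> states F \<or> w \<notin> states F) \<longrightarrow> trans F v w = {}) \<and>
     (\<forall>v \<in> states F. outf F v \<subseteq> outs F \<and> outf F v \<noteq> {})"

fun reach_from :: "('v, 'y, 'c) scdevice \<Rightarrow> 'v \<Rightarrow> 'y list \<Rightarrow> 'v set" where
  "reach_from F v [] = {v}"
| "reach_from F v (y # s) = (\<Union>w \<in> {w. y \<in> trans F v w}. reach_from F w s)"

definition reached :: "('v, 'y, 'c) scdevice \<Rightarrow> 'y list \<Rightarrow> 'v set" where
  "reached F s = (\<Union>v \<in> init F. reach_from F v s)"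

definition lang :: "('v, 'y, 'c) scdevice \<Rightarrow> 'y list set" where
  "lang F = {s. reached F s \<noteq> {}}"

definition outputs :: "('v, 'y, 'c) scdevice \<Rightarrow> 'y list \<Rightarrow> 'c set" where
  "outputs F s = (\<Union>v \<in> reached F s. outf F v)"

definition output_simulates ::
  "('w, 'y, 'c) scdevice \<Rightarrow> ('v, 'y, 'c) scdevice \<Rightarrow> ('y list \<times> 'y list) set \<Rightarrow> bool" where
  "output_simulates F' F R \<longleftrightarrow>
     (\<forall>s \<in> lang F. (\<exists>t \<in> lang F'. (s, t) \<in> R) \<and>
        (\<forall>t. (s, t) \<in> R \<longrightarrow> t \<in> lang F' \<and> outputs F' t \<subseteq> outputs F s))"

text \<open>The N-shrink on L, as a relation (graph of the function pi_N restricted to L).\<close>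
definition shrink :: "'y list set \<Rightarrow> 'y set \<Rightarrow> ('y list \<times> 'y list) set" where
  "shrink L N = {(s, filter (\<lambda>y. y \<notin> N) s) | s. s \<in> L}"

text \<open>The N-pump on L: insertion of N symbols anywhere except before the first symbol.\<close>
inductive_set pump :: "'y list set \<Rightarrow> 'y set \<Rightarrow> ('y list \<times> 'y list) set"
  for L :: "'y list set" and N :: "'y set" where
  pump_eps: "([], []) \<in> pump L N"
| pump_refl: "s \<in> L \<Longrightarrow> (s, s) \<in> pump L N"
| pump_ins: "(s, t) \<in> pump L N \<Longrightarrow> b \<in> N \<Longrightarrow> 1 \<le> k \<Longrightarrow> k \<le> length t \<Longrightarrow>
     (s, take k t @ b # drop k t) \<in> pump L N"

end

theory Submission
  imports Defs
begin

lemma pump_filter: "(s, t) \<in> pump L N \<Longrightarrow> filter (\<lambda>y. y \<notin> N) t = filter (\<lambda>y. y \<notin> N) s"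
proof (induction rule: pump.induct)
  case (pump_ins s t b k)
  have "filter (\<lambda>y. y \<notin> N) (take k t @ b # drop k t) = filter (\<lambda>y. y \<notin> N) t"
    using pump_ins.hyps(2) by (metis filter_append filter.simps(2) append_take_drop_id)
  then show ?case using pump_ins.IH by simp
qed auto

lemma reach_states: "scd F \<Longrightarrow> v \<in> states F \<Longrightarrow> reach_from F v s \<subseteq> states F"
proof (induction s arbitrary: v)
  case (Cons y s)
  have "\<And>w. y \<in> trans F v w \<Longrightarrow> w \<in> states F"
    using Cons.prems(1) unfolding scd_def by blast
  then show ?case using Cons by fastforce
qed simp

lemma bij_ex: "bij_betw g {0..<n} S \<Longrightarrow> w \<in> S \<Longrightarrow> \<exists>j. j < n \<and> g j = w"
  unfolding bij_betw_def by force

definition mk :: "('w, 'y, 'c) scdevice \<Rightarrow> 'y set \<Rightarrow> nat \<Rightarrow> (nat \<Rightarrow> 'w) \<Rightarrow> (nat, 'y, 'c) scdevice" where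
  "mk G N n g = \<lparr> states = {0..<n}, init = {i. i < n \<and> g i \<in> init G}, obs = obs G \<union> N,
     trans = (\<lambda>i j. if i < n \<and> j < n then (trans G (g i) (g j) - N) \<union> (if i = j then N else {}) else {}),
     outs = outs G, outf = (\<lambda>i. outf G (g i)) \<rparr>"

lemma mk_reach:
  assumes "scd G" "bij_betw g {0..<n} (states G)" "i < n"
  shows "reach_from (mk G N n g) i t = {j. j < n \<and> g j \<in> reach_from G (g i) (filter (\<lambda>y. y \<notin> N) t)}"
  using assms(3)
proof (induction t arbitrary: i)
  case Nil
  then show ?case using assms(2) by (auto simp: bij_betw_def inj_on_def)
next
  case (Cons y t)
  show ?case
  proof (cases "y \<in> N")
    case True
    have "{j. y \<in> trans (mk G N n g) i j} = {i}" using True Cons.prems by (auto simp: mk_def)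
    then show ?thesis using True Cons by simp
  next
    case False
    have e: "{j. y \<in> trans (mk G N n g) i j} = {j. j < n \<and> y \<in> trans G (g i) (g j)}"
      using False Cons.prems by (auto simp: mk_def)
    have st: "\<And>w. y \<in> trans G (g i) w \<Longrightarrow> w \<in> states G"
      using assms(1) unfolding scd_def by blast
    show ?thesis
    proof (rule set_eqI, rule iffI)
      fix k assume "k \<in> reach_from (mk G N n g) i (y # t)"
      then obtain j where "j < n" "y \<in> trans G (g i) (g j)" "k \<in> reach_from (mk G N n g) j t"
        using e by auto
      then show "k \<in> {j. j < n \<and> g j \<in> reach_from G (g i) (filter (\<lambda>y. y \<notin> N) (y # t))}"
        using Cons.IH False by auto
    next
      fix k assume "k \<in> {j. j < n \<and> g j \<in> reach_from G (g i) (filter (\<lambda>y. y \<notin> N) (y # t))}"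
      then obtain w where w: "k < n" "y \<in> trans G (g i) w" "g k \<in> reach_from G w (filter (\<lambda>y. y \<notin> N) t)"
        using False by auto
      have "w \<in> states G" using st w(2) .
      then obtain j where j: "j < n" "g j = w" using bij_ex[OF assms(2)] by blast
      have "k \<in> reach_from (mk G N n g) j t" using Cons.IH[OF j(1)] w j by auto
      then show "k \<in> reach_from (mk G N n g) i (y # t)" using e j w by auto
    qed
  qed
qed

lemma mk_reached:
  assumes "scd G" "bij_betw g {0..<n} (states G)"
  shows "reached (mk G N n g) t = {j. j < n \<and> g j \<in> reached G (filter (\<lambda>y. y \<notin> N) t)}"
proof -
  have ini: "init G \<subseteq> states G" using assms(1) by (simp add: scd_def)
  have "reached (mk G N n g) t = (\<Union>i\<in>{i. i < n \<and> g i \<in> init G}. {j. j < n \<and> g j \<in> reach_from G (g i) (filter (\<lambda>y. y \<notin> N) t)})"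
    unfolding reached_def using mk_reach[OF assms] by (simp add: mk_def)
  also have "\<dots> = {j. j < n \<and> g j \<in> reached G (filter (\<lambda>y. y \<notin> N) t)}"
  proof (rule set_eqI, rule iffI)
    fix x assume "x \<in> {j. j < n \<and> g j \<in> reached G (filter (\<lambda>y. y \<notin> N) t)}"
    then obtain v where v: "x < n" "v \<in> init G" "g x \<in> reach_from G v (filter (\<lambda>y. y \<notin> N) t)"
      by (auto simp: reached_def)
    then obtain i where "i < n" "g i = v" using ini bij_ex[OF assms(2)] by blast
    then show "x \<in> (\<Union>i\<in>{i. i < n \<and> g i \<in> init G}. {j. j < n \<and> g j \<in> reach_from G (g i) (filter (\<lambda>y. y \<notin> N) t)})"
      using v by auto
  qed (auto simp: reached_def)
  finally show ?thesis .
qed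

lemma mk_img:
  assumes "scd G" "bij_betw g {0..<n} (states G)"
  shows "g ` {j. j < n \<and> g j \<in> reached G s} = reached G s"
proof -
  have R: "reached G s \<subseteq> states G"
    using reach_states[OF assms(1)] assms(1) unfolding reached_def scd_def by blast
  show ?thesis
  proof (rule set_eqI, rule iffI)
    fix w assume "w \<in> reached G s"
    then obtain j where "j < n" "g j = w" using R bij_ex[OF assms(2)] by blast
    then show "w \<in> g ` {j. j < n \<and> g j \<in> reached G s}" using \<open>w \<in> reached G s\<close> by blast
  qed blast
qed

lemma mk_lang:
  assumes "scd G" "bij_betw g {0..<n} (states G)"
  shows "t \<in> lang (mk G N n g) \<longleftrightarrow> filter (\<lambda>y. y \<notin> N) t \<in> lang G"
proof -
  have e: "g ` {j. j < n \<and> g j \<in> reached G (filter (\<lambda>y. y \<notin> N) t)} = reached G (filter (\<lambda>y. y \<notin> N) t)"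
    by (rule mk_img[OF assms])
  have "{j. j < n \<and> g j \<in> reached G (filter (\<lambda>y. y \<notin> N) t)} \<noteq> {} \<longleftrightarrow> reached G (filter (\<lambda>y. y \<notin> N) t) \<noteq> {}"
    by (subst e[symmetric]) simp
  then have "reached (mk G N n g) t \<noteq> {} \<longleftrightarrow> reached G (filter (\<lambda>y. y \<notin> N) t) \<noteq> {}"
    by (simp only: mk_reached[OF assms])
  then show ?thesis unfolding lang_def by simp
qed

lemma mk_outputs:
  assumes "scd G" "bij_betw g {0..<n} (states G)"
  shows "outputs (mk G N n g) t = outputs G (filter (\<lambda>y. y \<notin> N) t)"
proof -
  have "outputs (mk G N n g) t = (\<Union>j\<in>{j. j < n \<and> g j \<in> reached G (filter (\<lambda>y. y \<notin> N) t)}. outf G (g j))"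
    unfolding outputs_def mk_reached[OF assms] by (simp add: mk_def)
  also have "\<dots> = (\<Union>v\<in>g ` {j. j < n \<and> g j \<in> reached G (filter (\<lambda>y. y \<notin> N) t)}. outf G v)"
    by simp
  also have "\<dots> = outputs G (filter (\<lambda>y. y \<notin> N) t)"
    unfolding mk_img[OF assms] outputs_def ..
  finally show ?thesis .
qed

lemma mk_scd:
  assumes "scd G" "bij_betw g {0..<n} (states G)" "finite N"
  shows "scd (mk G N n g)"
proof -
  have "n \<noteq> 0" using assms(1,2) by (auto simp: scd_def bij_betw_def)
  moreover obtain v where "v \<in> init G" using assms(1) by (auto simp: scd_def)
  moreover then obtain i where "i < n" "g i = v" using assms(1) bij_ex[OF assms(2)] by (auto simp: scd_def)
  ultimately have 1: "init (mk G N n g) \<noteq> {}" by (auto simp: mk_def)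
  have 2: "\<forall>v w. trans (mk G N n g) v w \<subseteq> obs (mk G N n g)"
    using assms(1) unfolding scd_def mk_def by auto
  have 3: "\<forall>v\<in>states (mk G N n g). outf (mk G N n g) v \<subseteq> outs (mk G N n g) \<and> outf (mk G N n g) v \<noteq> {}"
  proof
    fix v assume "v \<in> states (mk G N n g)"
    then have "g v \<in> states G" using assms(2) by (auto simp: mk_def bij_betw_def)
    then show "outf (mk G N n g) v \<subseteq> outs (mk G N n g) \<and> outf (mk G N n g) v \<noteq> {}"
      using assms(1) by (simp add: scd_def mk_def)
  qed
  have 4: "states (mk G N n g) \<noteq> {}" "finite (states (mk G N n g))"
     "init (mk G N n g) \<subseteq> states (mk G N n g)" "finite (obs (mk G N n g))"
     "\<forall>v w. (v \<notin> states (mk G N n g) \<or> w \<notin> states (mk G N n g)) \<longrightarrow> trans (mk G N n g) v w = {}"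
    using \<open>n \<noteq> 0\<close> assms(1,3) by (auto simp: mk_def scd_def)
  show ?thesis unfolding scd_def using 1 2 3 4 by blast
qed

theorem lemma4:
  fixes F :: "('v, 'y, 'c) scdevice" and N :: "'y set"
  assumes "scd F"
    and "N \<subseteq> obs F"
    and "\<exists>F' :: ('w, 'y, 'c) scdevice. scd F' \<and> output_simulates F' F (shrink (lang F) N)"
  shows "\<exists>F'' :: (nat, 'y, 'c) scdevice. scd F'' \<and> output_simulates F'' F (pump (lang F) N)"
proof -
  obtain G :: "('w, 'y, 'c) scdevice" where G: "scd G" "output_simulates G F (shrink (lang F) N)"
    using assms(3) by blast
  have "finite (states G)" using G(1) by (simp add: scd_def)
  then obtain g where g: "bij_betw g {0..<card (states G)} (states G)"
    using ex_bij_betw_nat_finite by blast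
  have fN: "finite N" using assms(1,2) by (auto simp: scd_def intro: finite_subset)
  let ?H = "mk G N (card (states G)) g"
  have "output_simulates ?H F (pump (lang F) N)"
    unfolding output_simulates_def
  proof (intro ballI conjI allI impI)
    fix s assume s: "s \<in> lang F"
    have sh: "(s, filter (\<lambda>y. y \<notin> N) s) \<in> shrink (lang F) N" using s by (auto simp: shrink_def)
    have A: "filter (\<lambda>y. y \<notin> N) s \<in> lang G" and B: "outputs G (filter (\<lambda>y. y \<notin> N) s) \<subseteq> outputs F s"
      using G(2) s sh unfolding output_simulates_def by blast+
    show "\<exists>t\<in>lang ?H. (s, t) \<in> pump (lang F) N"
      using A s mk_lang[OF G(1) g] pump_refl by blast
    fix t assume "(s, t) \<in> pump (lang F) N"
    then have f: "filter (\<lambda>y. y \<notin> N) t = filter (\<lambda>y. y \<notin> N) s" by (rule pump_filter)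
    show "t \<in> lang ?H" using A f mk_lang[OF G(1) g] by simp
    show "outputs ?H t \<subseteq> outputs F s" using B f mk_outputs[OF G(1) g] by simp
  qed
  then show ?thesis using mk_scd[OF G(1) g fN] by blast
qed

end
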